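(* For every finite-dimensional representation $\rho$ of $\mathrm{U}(n)$ and every weighted hypergraph $\Gamma=([n],w)$, the torus-invariant subspace $\mathrm{TorInv}(\rho)$ is invariant under ${\cal L}(\Gamma,\rho)$.
   Context: A weighted hypergraph $\Gamma=([n],w)$ assigns a weight $w_B$ to every $B\subseteq[n]$. $\mathrm{U}_B\le\mathrm{U}(n)$ is the subgroup of unitaries coinciding with the identity outside the minor with rows and columns in $B$, and $\mu_B$ its Haar probability measure; ${\cal L}(\Gamma,\rho)=\sum_Bw_B[I-\int_{\mathrm{U}_B}\rho(A)d\mu_B(A)]$. $T_n\le\mathrm{U}(n)$ is the subgroup of diagonal unitary matrices and, for $\rho\colon\mathrm{U}(n)\to\mathrm{GL}(V)$, $\mathrm{TorInv}(\rho)=\{v\in V:\rho(A)v=v\ \forall A\in T_n\}$. *)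

theory Defs
  imports "HOL-Probability.Probability"
begin

text \<open>Complex n x n matrices are indexed by a finite type 'n; [n] is UNIV :: 'n set.\<close>

definition conj_transpose :: "complex^'n^'m \<Rightarrow> complex^'m^'n" where
  "conj_transpose A = (\<chi> i j. cnj (A $ j $ i))"

definition unitary_group :: "(complex^'n^'n) set" where
  "unitary_group = {A. A ** conj_transpose A = mat 1 \<and> conj_transpose A ** A = mat 1}"

definition unitary_sub :: "'n set \<Rightarrow> (complex^'n^'n) set" where
  "unitary_sub B = {A \<in> unitary_group.
      \<forall>i j. (i \<notin> B \<or> j \<notin> B) \<longrightarrow> A $ i $ j = (if i = j then 1 else 0)}"

definition torus :: "(complex^'n^'n) set" where
  "torus = {A \<in> unitary_group. \<forall>i j. i \<noteq> j \<longrightarrow> A $ i $ j = 0}"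

definition haar_measure :: "(complex^'n^'n) set \<Rightarrow> (complex^'n^'n) measure" where
  "haar_measure G = (THE M. sets M = sets borel \<and> prob_space M \<and> emeasure M G = 1 \<and>
      (\<forall>A\<in>G. distr M borel (\<lambda>X. A ** X) = M))"

definition is_rep :: "(complex^'n^'n \<Rightarrow> complex^'m^'m) \<Rightarrow> bool" where
  "is_rep \<rho> \<longleftrightarrow> continuous_on unitary_group \<rho> \<and> \<rho> (mat 1) = mat 1 \<and>
     (\<forall>A\<in>unitary_group. \<forall>B\<in>unitary_group. \<rho> (A ** B) = \<rho> A ** \<rho> B)"

definition hyper_laplacian ::
  "('n set \<Rightarrow> real) \<Rightarrow> (complex^'n^'n \<Rightarrow> complex^'m^'m) \<Rightarrow> complex^'m^'m" where
  "hyper_laplacian w \<rho> =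
     (\<Sum>B\<in>(UNIV :: 'n set set). w B *\<^sub>R (mat 1 - integral\<^sup>L (haar_measure (unitary_sub B)) \<rho>))"

definition TorInv :: "(complex^'n^'n \<Rightarrow> complex^'m^'m) \<Rightarrow> (complex^'m) set" where
  "TorInv \<rho> = {v. \<forall>A\<in>torus. \<rho> A *v v = v}"

end

theory Submission
  imports Defs
begin


definition hip :: "complex^'n \<Rightarrow> complex^'n \<Rightarrow> complex" where
  "hip u v = (\<Sum>i\<in>UNIV. u$i * cnj (v$i))"

lemma ct_nth[simp]: "conj_transpose A $ i $ j = cnj (A $ j $ i)"
  by (simp add: conj_transpose_def)

lemma ct_ct[simp]: "conj_transpose (conj_transpose A) = A"
  by (simp add: vec_eq_iff)

lemma ct_mat1[simp]: "conj_transpose (mat 1 :: complex^'n^'n) = mat 1"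
  by (simp add: vec_eq_iff mat_def)

lemma ct_mult: "conj_transpose (A ** B) = conj_transpose B ** conj_transpose A"
  by (simp add: vec_eq_iff matrix_matrix_mult_def mult.commute)

lemma unitary_iff: "A \<in> unitary_group \<longleftrightarrow> A ** conj_transpose A = mat 1 \<and> conj_transpose A ** A = mat 1"
  by (simp add: unitary_group_def)

lemma unitary_left: "A \<in> unitary_group \<Longrightarrow> conj_transpose A ** A = mat 1"
  by (simp add: unitary_group_def)
lemma unitary_right: "A \<in> unitary_group \<Longrightarrow> A ** conj_transpose A = mat 1"
  by (simp add: unitary_group_def)

lemma unitary_mat1[simp]: "mat 1 \<in> unitary_group"
  by (simp add: unitary_group_def)

lemma unitary_mult: "A \<in> unitary_group \<Longrightarrow> B \<in> unitary_group \<Longrightarrow> A ** B \<in> unitary_group"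
proof -
  assume a: "A \<in> unitary_group" and b: "B \<in> unitary_group"
  have "A ** B ** conj_transpose (A ** B) = A ** (B ** conj_transpose B) ** conj_transpose A"
    by (simp add: ct_mult matrix_mul_assoc)
  also have "\<dots> = mat 1" using a b by (simp add: unitary_iff)
  finally have 1: "A ** B ** conj_transpose (A ** B) = mat 1" .
  have "conj_transpose (A ** B) ** (A ** B) = conj_transpose B ** (conj_transpose A ** A) ** B"
    by (simp add: ct_mult matrix_mul_assoc)
  also have "\<dots> = mat 1" using a b by (simp add: unitary_iff)
  finally show ?thesis using 1 by (simp add: unitary_iff)
qed

lemma unitary_ct: "A \<in> unitary_group \<Longrightarrow> conj_transpose A \<in> unitary_group"
  by (simp add: unitary_iff)

lemma hip_unitary:
  assumes "A \<in> unitary_group"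
  shows "hip (A *v u) (A *v v) = hip u v"
proof -
  have L: "(\<Sum>i\<in>UNIV. cnj (A$i$l) * A$i$k) = (if l = k then 1 else 0)" for l k
  proof -
    have "(conj_transpose A ** A) $ l $ k = (if l = k then 1 else 0)"
      using unitary_left[OF assms] by (simp add: mat_def)
    then show ?thesis by (simp add: matrix_matrix_mult_def)
  qed
  have "hip (A *v u) (A *v v) = (\<Sum>i\<in>UNIV. (\<Sum>k\<in>UNIV. A$i$k * u$k) * (\<Sum>l\<in>UNIV. cnj (A$i$l) * cnj (v$l)))"
    by (simp add: hip_def matrix_vector_mult_def)
  also have "\<dots> = (\<Sum>i\<in>UNIV. \<Sum>k\<in>UNIV. \<Sum>l\<in>UNIV. (u$k * cnj (v$l)) * (cnj (A$i$l) * A$i$k))"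
    by (simp add: sum_distrib_left sum_distrib_right mult_ac) (rule sum.cong[OF refl], rule sum.swap)
  also have "\<dots> = (\<Sum>k\<in>UNIV. \<Sum>l\<in>UNIV. (u$k * cnj (v$l)) * (\<Sum>i\<in>UNIV. cnj (A$i$l) * A$i$k))"
    by (simp add: sum_distrib_left) (subst sum.swap, rule sum.cong[OF refl], rule sum.swap)
  also have "\<dots> = (\<Sum>k\<in>UNIV. \<Sum>l\<in>UNIV. (u$k * cnj (v$l)) * (if l = k then 1 else 0))"
    by (simp add: L)
  also have "\<dots> = hip u v" by (simp add: hip_def if_distrib cong: if_cong)
  finally show ?thesis .
qed

lemma norm_sq_hip: "complex_of_real ((norm v)^2) = hip v (v :: complex^'n)"
proof -
  have "(norm v)^2 = (\<Sum>i\<in>UNIV. (cmod (v$i))^2)"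
    by (simp add: norm_vec_def L2_set_def sum_nonneg)
  moreover have "complex_of_real ((cmod z)^2) = z * cnj z" for z
    by (simp only: complex_norm_square)
  ultimately show ?thesis by (simp add: hip_def del: of_real_power)
qed

lemma norm_unitary:
  assumes "A \<in> unitary_group"
  shows "norm (A *v v) = norm (v :: complex^'n)"
proof -
  have "complex_of_real ((norm (A *v v))^2) = complex_of_real ((norm v)^2)"
    by (simp only: norm_sq_hip hip_unitary[OF assms])
  then have "(norm (A *v v))^2 = (norm v)^2" using of_real_eq_iff by blast
  then show ?thesis by (simp add: power2_eq_iff_nonneg)
qed

lemma norm_mat_sq: "(norm (Z :: complex^'n^'m))^2 = (\<Sum>j\<in>UNIV. (norm (column j Z))^2)"
proof -
  have "(norm Z)^2 = (\<Sum>i\<in>UNIV. (norm (Z$i))^2)"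
    by (simp add: norm_vec_def L2_set_def sum_nonneg)
  also have "\<dots> = (\<Sum>i\<in>UNIV. \<Sum>j\<in>UNIV. (cmod (Z$i$j))^2)"
    by (simp add: norm_vec_def L2_set_def sum_nonneg)
  also have "\<dots> = (\<Sum>j\<in>UNIV. \<Sum>i\<in>UNIV. (cmod (Z$i$j))^2)" by (rule sum.swap)
  also have "\<dots> = (\<Sum>j\<in>UNIV. (norm (column j Z))^2)"
    by (simp add: norm_vec_def L2_set_def sum_nonneg column_def)
  finally show ?thesis .
qed

lemma column_mult: "column j (A ** Z) = A *v column j Z"
  by (simp add: vec_eq_iff column_def matrix_matrix_mult_def matrix_vector_mult_def)

lemma norm_left_unitary:
  assumes "A \<in> unitary_group"
  shows "norm (A ** Z) = norm (Z :: complex^'n^'n)"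
proof -
  have "(norm (A ** Z))^2 = (norm Z)^2"
    by (simp add: norm_mat_sq column_mult norm_unitary[OF assms])
  then show ?thesis by (simp add: power2_eq_iff_nonneg)
qed

lemma linear_left_mult: "linear (\<lambda>Z. (A :: complex^'n^'n) ** Z)"
  by (rule linearI) (simp_all add: vec_eq_iff matrix_matrix_mult_def distrib_left sum.distrib
      scaleR_sum_right mult_scaleR_right)

lemma surj_left_unitary:
  assumes "A \<in> unitary_group" shows "surj (\<lambda>Z. (A :: complex^'n^'n) ** Z)"
proof (rule surjI)
  fix Z show "A ** (conj_transpose A ** Z) = Z"
    using assms by (simp add: matrix_mul_assoc unitary_iff)
qed


definition haar_pred :: "(complex^'n^'n) set \<Rightarrow> (complex^'n^'n) measure \<Rightarrow> bool" where
  "haar_pred G M \<longleftrightarrow> sets M = sets borel \<and> prob_space M \<and> emeasure M G = 1 \<and>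
      (\<forall>A\<in>G. distr M borel (\<lambda>X. A ** X) = M)"

lemma haar_measure_eq: "haar_measure G = (THE M. haar_pred G M)"
  by (simp add: haar_measure_def haar_pred_def)

lemma continuous_mult_pair: "continuous_on UNIV (\<lambda>p::(complex^'n^'n) \<times> (complex^'n^'n). fst p ** snd p)"
  unfolding matrix_matrix_mult_def
  by (intro continuous_intros)

lemma continuous_ct: "continuous_on UNIV (conj_transpose :: complex^'n^'n \<Rightarrow> complex^'n^'n)"
  unfolding conj_transpose_def
  by (intro continuous_intros)

lemma continuous_left_mult: "continuous_on UNIV (\<lambda>X::complex^'n^'n. A ** X)"
  unfolding matrix_matrix_mult_def
  by (intro continuous_intros)

lemma meas_left_mult[measurable]: "(\<lambda>X::complex^'n^'n. A ** X) \<in> borel_measurable borel"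
  by (rule borel_measurable_continuous_onI[OF continuous_left_mult])

lemma meas_right_mult[measurable]: "(\<lambda>X::complex^'n^'n. X ** A) \<in> borel_measurable borel"
  unfolding matrix_matrix_mult_def by (intro borel_measurable_continuous_onI continuous_intros)

lemma meas_ct[measurable]: "(conj_transpose :: complex^'n^'n \<Rightarrow> complex^'n^'n) \<in> borel_measurable borel"
  by (rule borel_measurable_continuous_onI[OF continuous_ct])

lemma meas_mult_pair: "(\<lambda>p::(complex^'n^'n) \<times> (complex^'n^'n). fst p ** snd p) \<in> borel_measurable (borel \<Otimes>\<^sub>M borel)"
  unfolding borel_prod by (rule borel_measurable_continuous_onI[OF continuous_mult_pair])

locale matgroup =
  fixes G :: "(complex^'n^'n) set"
  assumes G_unitary: "G \<subseteq> unitary_group"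
    and G_mult: "\<And>A B. A \<in> G \<Longrightarrow> B \<in> G \<Longrightarrow> A ** B \<in> G"
    and G_ct: "\<And>A. A \<in> G \<Longrightarrow> conj_transpose A \<in> G"
    and G_borel: "G \<in> sets borel"
begin

lemma left_inv_nn:
  assumes hM: "haar_pred G M" and y: "y \<in> G" and f: "f \<in> borel_measurable borel"
  shows "(\<integral>\<^sup>+x. f (y ** x) \<partial>M) = (\<integral>\<^sup>+x. f x \<partial>M)"
proof -
  have sM: "sets M = sets borel" and dM: "distr M borel (\<lambda>X. y ** X) = M"
    using hM y by (auto simp: haar_pred_def)
  have m: "(\<lambda>X. y ** X) \<in> measurable M borel" by (simp add: measurable_cong_sets[OF sM refl])
  have "(\<integral>\<^sup>+x. f x \<partial>M) = (\<integral>\<^sup>+x. f x \<partial>distr M borel (\<lambda>X. y ** X))" by (simp add: dM)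
  also have "\<dots> = (\<integral>\<^sup>+x. f (y ** x) \<partial>M)"
    by (rule nn_integral_distr[OF m]) (use f in simp)
  finally show ?thesis by simp
qed

lemma haar_AE:
  assumes hM: "haar_pred G M"
  shows "AE x in M. x \<in> G"
proof -
  have sM: "sets M = sets borel" and pM: "prob_space M" and e: "emeasure M G = 1"
    using hM by (auto simp: haar_pred_def)
  show ?thesis
    using prob_space.AE_in_set_eq_1[OF pM] e G_borel sM
    by (simp add: measure_def)
qed

lemma haar_unique_aux:
  assumes hM: "haar_pred G M" and hN: "haar_pred G N"
  shows "M = distr N borel conj_transpose"
proof -
  define Nt where "Nt = distr N borel conj_transpose"
  have sM: "sets M = sets borel" and pM: "prob_space M"
    using hM by (auto simp: haar_pred_def)
  have sN: "sets N = sets borel" and pN: "prob_space N"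
    using hN by (auto simp: haar_pred_def)
  have mct: "conj_transpose \<in> measurable N borel" by (simp add: measurable_cong_sets[OF sN refl])
  have sNt: "sets Nt = sets borel" by (simp add: Nt_def)
  have pNt: "prob_space Nt" unfolding Nt_def by (rule prob_space.prob_space_distr[OF pN mct])
  have ctG: "conj_transpose -` G = G"
  proof
    show "conj_transpose -` G \<subseteq> G" using G_ct by (metis ct_ct subsetI vimageE)
    show "G \<subseteq> conj_transpose -` G" using G_ct by auto
  qed
  have eNt: "emeasure Nt G = 1"
    using hN G_borel mct by (simp add: Nt_def emeasure_distr ctG sets_eq_imp_space_eq[OF sN] haar_pred_def)
  have AENt: "AE y in Nt. y \<in> G"
    using prob_space.AE_in_set_eq_1[OF pNt] eNt G_borel sNt by (simp add: measure_def)
  interpret pair_sigma_finite M Nt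
    using pM pNt by (simp add: pair_sigma_finite_def prob_space_imp_sigma_finite)
  show ?thesis
  proof (rule measure_eqI)
    show "sets M = sets (distr N borel conj_transpose)" using sM by simp
    fix E assume "E \<in> sets M"
    then have E: "E \<in> sets borel" using sM by simp
    have mE: "(\<lambda>x. indicator E (y ** x) :: ennreal) \<in> borel_measurable borel" for y :: "complex^'n^'n"
      using E by measurable
    have "emeasure M E = (\<integral>\<^sup>+y. emeasure M E \<partial>Nt)"
      using prob_space.emeasure_space_1[OF pNt] by simp
    also have "\<dots> = (\<integral>\<^sup>+y. (\<integral>\<^sup>+x. indicator E (y ** x) \<partial>M) \<partial>Nt)"
    proof (rule nn_integral_cong_AE)
      show "AE y in Nt. emeasure M E = (\<integral>\<^sup>+x. indicator E (y ** x) \<partial>M)"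
        using AENt
      proof eventually_elim
        case (elim y)
        have "(\<integral>\<^sup>+x. indicator E (y ** x) \<partial>M) = (\<integral>\<^sup>+x. indicator E x \<partial>M)"
          by (rule left_inv_nn[OF hM elim]) (use E in simp)
        also have "\<dots> = emeasure M E" using E sM by simp
        finally show ?case by simp
      qed
    qed
    also have "\<dots> = (\<integral>\<^sup>+x. (\<integral>\<^sup>+y. indicator E (y ** x) \<partial>Nt) \<partial>M)"
    proof (rule Fubini')
      have "(\<lambda>p::(complex^'n^'n) \<times> (complex^'n^'n). indicator E (snd p ** fst p) :: ennreal) \<in> borel_measurable (borel \<Otimes>\<^sub>M borel)"
      proof -
        have "(\<lambda>p::(complex^'n^'n) \<times> (complex^'n^'n). snd p ** fst p) \<in> borel_measurable (borel \<Otimes>\<^sub>M borel)"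
          unfolding borel_prod matrix_matrix_mult_def
          by (intro borel_measurable_continuous_onI continuous_intros)
        moreover have ind: "(indicator E :: _ \<Rightarrow> ennreal) \<in> borel_measurable borel" using E by simp
        ultimately show ?thesis by (rule measurable_compose)
      qed
      then show "(\<lambda>(x, y). indicator E (y ** x) :: ennreal) \<in> borel_measurable (M \<Otimes>\<^sub>M Nt)"
        by (simp add: measurable_cong_sets[OF sets_pair_measure_cong[OF sM sNt] refl] case_prod_beta)
    qed
    also have "\<dots> = (\<integral>\<^sup>+x. emeasure Nt E \<partial>M)"
    proof (rule nn_integral_cong_AE)
      show "AE x in M. (\<integral>\<^sup>+y. indicator E (y ** x) \<partial>Nt) = emeasure Nt E"
        using haar_AE[OF hM]
      proof eventually_elim
        case (elim x)
        have g: "(\<lambda>z. indicator E (conj_transpose z) :: ennreal) \<in> borel_measurable borel"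
          using E by measurable
        have "(\<integral>\<^sup>+y. indicator E (y ** x) \<partial>Nt) = (\<integral>\<^sup>+y. indicator E (conj_transpose y ** x) \<partial>N)"
          unfolding Nt_def by (rule nn_integral_distr[OF mct]) (use E in measurable)
        also have "\<dots> = (\<integral>\<^sup>+y. indicator E (conj_transpose (conj_transpose x ** y)) \<partial>N)"
          by (simp add: ct_mult)
        also have "\<dots> = (\<integral>\<^sup>+y. indicator E (conj_transpose y) \<partial>N)"
          by (rule left_inv_nn[OF hN G_ct[OF elim] g])
        also have "\<dots> = (\<integral>\<^sup>+y. indicator E y \<partial>Nt)"
          unfolding Nt_def by (rule nn_integral_distr[OF mct, symmetric]) (use E in measurable)
        also have "\<dots> = emeasure Nt E" using E sNt by simp
        finally show ?case .
      qed
    qed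
    also have "\<dots> = emeasure Nt E"
      using prob_space.emeasure_space_1[OF pM] by simp
    finally show "emeasure M E = emeasure (distr N borel conj_transpose) E" by (simp add: Nt_def)
  qed
qed

lemma haar_unique:
  assumes hM: "haar_pred G M" and hN: "haar_pred G N"
  shows "M = N"
  using haar_unique_aux[OF hM hN] haar_unique_aux[OF hN hN] by simp

lemma haar_measure_pred:
  assumes "\<exists>M. haar_pred G M"
  shows "haar_pred G (haar_measure G)"
  unfolding haar_measure_eq
  by (rule theI') (use assms haar_unique in blast)

end


lemma hip_diff_left: "hip (u - v) w = hip u w - hip v w"
  by (simp add: hip_def algebra_simps sum_subtractf)
lemma hip_add_left: "hip (u + v) w = hip u w + hip v w"
  by (simp add: hip_def algebra_simps sum.distrib)
lemma hip_smult_left: "hip (c *s u) w = c * hip u w"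
  by (simp add: hip_def sum_distrib_left mult.assoc)
lemma hip_zero_left[simp]: "hip 0 w = 0"
  by (simp add: hip_def)
lemma hip_sum_left: "hip (\<Sum>j\<in>S. f j) w = (\<Sum>j\<in>S. hip (f j) w)"
  by (induction S rule: infinite_finite_induct) (simp_all add: hip_add_left)
lemma hip_cnj: "hip v u = cnj (hip u v)"
  by (simp add: hip_def mult.commute)

definition nrm :: "complex^'n \<Rightarrow> complex^'n" where
  "nrm r = complex_of_real (inverse (norm r)) *s r"

definition rsd :: "(nat \<Rightarrow> complex^'n) \<Rightarrow> complex^'n \<Rightarrow> nat \<Rightarrow> complex^'n" where
  "rsd Q y k = y - (\<Sum>j<k. hip y (Q j) *s Q j)"

primrec gsq :: "(nat \<Rightarrow> complex^'n) \<Rightarrow> nat \<Rightarrow> nat \<Rightarrow> complex^'n" where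
  "gsq x 0 = (\<lambda>_. 0)"
| "gsq x (Suc k) = (gsq x k)(k := nrm (rsd (gsq x k) (x k) k))"

definition good :: "(nat \<Rightarrow> complex^'n) \<Rightarrow> nat \<Rightarrow> bool" where
  "good x K \<longleftrightarrow> (\<forall>k<K. rsd (gsq x k) (x k) k \<noteq> 0)"

lemma good_Suc: "good x (Suc K) \<longleftrightarrow> good x K \<and> rsd (gsq x K) (x K) K \<noteq> 0"
  by (auto simp: good_def less_Suc_eq)

lemma gsq_ge: "K \<le> j \<Longrightarrow> gsq x K j = 0"
  by (induction K) auto

lemma gsq_stable: "j < k \<Longrightarrow> gsq x k j = gsq x (Suc j) j"
  by (induction k) (auto simp: less_Suc_eq)

lemma hip_nrm: "r \<noteq> 0 \<Longrightarrow> hip (nrm r) (nrm r) = 1"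
proof -
  assume r: "r \<noteq> 0"
  have "hip (nrm r) (nrm r) = complex_of_real (inverse (norm r))^2 * hip r r"
    by (simp add: nrm_def hip_def sum_distrib_left power2_eq_square mult_ac)
  also have "hip r r = complex_of_real ((norm r)^2)" by (rule norm_sq_hip[symmetric])
  finally show ?thesis using r by (simp add: field_simps power2_eq_square flip: of_real_mult)
qed

lemma mv_smult: "A *v (c *s v) = c *s (A *v (v::complex^'n))"
  by (simp add: vec_eq_iff matrix_vector_mult_def sum_distrib_left mult_ac)

lemma mv_sum: "A *v (\<Sum>j\<in>S. f j) = (\<Sum>j\<in>S. A *v (f j :: complex^'n))"
  by (induction S rule: infinite_finite_induct) (simp_all add: matrix_vector_right_distrib)

lemma rsd_unitary:
  assumes "A \<in> unitary_group"
  shows "rsd (\<lambda>j. A *v Q j) (A *v y) k = A *v rsd Q y k"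
  by (simp add: rsd_def hip_unitary[OF assms] matrix_vector_mult_diff_distrib mv_sum mv_smult)

lemma nrm_unitary:
  assumes "A \<in> unitary_group"
  shows "nrm (A *v r) = A *v nrm r"
  by (simp add: nrm_def norm_unitary[OF assms] mv_smult)

lemma gsq_unitary:
  assumes "A \<in> unitary_group"
  shows "gsq (\<lambda>k. A *v x k) K = (\<lambda>j. A *v gsq x K j)"
proof (induction K)
  case 0 then show ?case by simp
next
  case (Suc K)
  show ?case
    by (rule ext) (simp add: Suc rsd_unitary[OF assms] nrm_unitary[OF assms])
qed

lemma rsd_gsq_unitary:
  assumes "A \<in> unitary_group"
  shows "rsd (gsq (\<lambda>k. A *v x k) K) (A *v x K) K = A *v rsd (gsq x K) (x K) K"
  by (simp add: gsq_unitary[OF assms] rsd_unitary[OF assms])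

lemma unitary_inj:
  assumes "A \<in> unitary_group" and "A *v u = A *v v" shows "u = v"
proof -
  have "conj_transpose A *v (A *v u) = conj_transpose A *v (A *v v)" using assms(2) by simp
  then show ?thesis using unitary_left[OF assms(1)] by (simp add: matrix_vector_mul_assoc)
qed

lemma good_unitary:
  fixes A :: "complex^'n^'n" and x :: "nat \<Rightarrow> complex^'n"
  assumes "A \<in> unitary_group"
  shows "good (\<lambda>k. A *v x k) K \<longleftrightarrow> good x K"
proof -
  have "A *v v = 0 \<longleftrightarrow> v = 0" for v :: "complex^'n"
    using unitary_inj[OF assms, of v 0] by auto
  then show ?thesis
    unfolding good_def using rsd_gsq_unitary[OF assms] by presburger
qed

lemma gsq_orth:
  assumes "good x K" "i < K" "j < K"
  shows "hip (gsq x K i) (gsq x K j) = (if i = j then 1 else 0)"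
  using assms
proof (induction K arbitrary: i j)
  case 0 then show ?case by simp
next
  case (Suc K)
  define Q where "Q = gsq x K"
  define r where "r = rsd Q (x K) K"
  have gK: "good x K" and r0: "r \<noteq> 0" using Suc.prems(1) by (auto simp: good_Suc r_def Q_def)
  have IH: "i < K \<Longrightarrow> j < K \<Longrightarrow> hip (Q i) (Q j) = (if i = j then 1 else 0)" for i j
    using Suc.IH[OF gK] by (simp add: Q_def)
  have orth_r: "hip r (Q i) = 0" if i: "i < K" for i
  proof -
    have "hip r (Q i) = hip (x K) (Q i) - (\<Sum>j<K. hip (x K) (Q j) * hip (Q j) (Q i))"
      by (simp add: r_def rsd_def hip_diff_left hip_sum_left hip_smult_left)
    also have "(\<Sum>j<K. hip (x K) (Q j) * hip (Q j) (Q i)) = (\<Sum>j<K. if j = i then hip (x K) (Q i) else 0)"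
      by (rule sum.cong) (auto simp: IH i)
    also have "\<dots> = hip (x K) (Q i)" using i by simp
    finally show ?thesis by simp
  qed
  have orth_n: "hip (nrm r) (Q i) = 0" if "i < K" for i
    using orth_r[OF that] by (simp add: nrm_def hip_smult_left)
  have new: "gsq x (Suc K) = Q(K := nrm r)" by (simp add: Q_def r_def)
  show ?case
  proof (cases "i = K"; cases "j = K")
    assume "i = K" "j = K" then show ?thesis using r0 by (simp add: new hip_nrm del: gsq.simps)
  next
    assume "i = K" "j \<noteq> K" then show ?thesis using Suc.prems orth_n[of j] by (simp add: new del: gsq.simps)
  next
    assume "i \<noteq> K" "j = K" then show ?thesis using Suc.prems orth_n[of i]
      by (simp add: new hip_cnj[of "Q i"] del: gsq.simps)
  next
    assume "i \<noteq> K" "j \<noteq> K" then show ?thesis using Suc.prems IH by (simp add: new del: gsq.simps)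
  qed
qed

lemma gsq_supp:
  assumes "\<And>k. \<forall>i. i \<notin> B \<longrightarrow> x k $ i = 0" and "i \<notin> B"
  shows "gsq x K j $ i = 0"
proof (induction K arbitrary: j)
  case 0 then show ?case by simp
next
  case (Suc K)
  have "rsd (gsq x K) (x K) K $ i = 0"
    using assms Suc.IH by (simp add: rsd_def sum_component)
  then show ?case using Suc.IH by (simp add: nrm_def)
qed

lemma gsq_orthonormal_input:
  assumes on: "\<And>i j. i < N \<Longrightarrow> j < N \<Longrightarrow> hip (x i) (x j) = (if i = j then 1 else 0)"
  shows "K \<le> N \<Longrightarrow> good x K \<and> (\<forall>j<K. gsq x K j = x j)"
proof (induction K)
  case 0 then show ?case by (simp add: good_def)
next
  case (Suc K)
  then have KN: "K < N" by simp
  have IH: "good x K" "\<And>j. j < K \<Longrightarrow> gsq x K j = x j" using Suc by auto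
  have r: "rsd (gsq x K) (x K) K = x K"
  proof -
    have "(\<Sum>j<K. hip (x K) (gsq x K j) *s gsq x K j) = (\<Sum>j<K. 0 *s x j)"
      by (rule sum.cong) (use IH KN on in auto)
    then show ?thesis by (simp add: rsd_def)
  qed
  have nz: "x K \<noteq> 0" using on[OF KN KN] by auto
  have n1: "norm (x K) = 1"
  proof -
    have "complex_of_real ((norm (x K))^2) = hip (x K) (x K)" by (rule norm_sq_hip)
    also have "\<dots> = 1" using on[OF KN KN] by simp
    finally have "(norm (x K))^2 = 1" using of_real_eq_1_iff by blast
    then show ?thesis by (metis norm_ge_zero power2_eq_1_iff neg_0_le_iff_le not_one_le_zero)
  qed
  have "nrm (x K) = x K" by (simp add: nrm_def n1 vec_eq_iff)
  then show ?case using IH r nz by (auto simp: good_Suc less_Suc_eq)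
qed


lemma cont_hip[continuous_intros]:
  "continuous_on S f \<Longrightarrow> continuous_on S g \<Longrightarrow> continuous_on S (\<lambda>z. hip (f z) (g z))"
  unfolding hip_def by (intro continuous_intros)

lemma cont_smult[continuous_intros]:
  "continuous_on S f \<Longrightarrow> continuous_on S g \<Longrightarrow> continuous_on S (\<lambda>z. f z *s (g z :: complex^'n))"
  unfolding vector_scalar_mult_def by (intro continuous_intros)

lemma cont_nrm:
  assumes "continuous_on S f" "\<And>z. z \<in> S \<Longrightarrow> f z \<noteq> 0"
  shows "continuous_on S (\<lambda>z. nrm (f z :: complex^'n))"
  unfolding nrm_def using assms by (intro continuous_intros) auto

lemma gsq_cont:
  fixes x :: "'z::topological_space \<Rightarrow> nat \<Rightarrow> complex^'n"
  assumes xc: "\<And>k. continuous_on UNIV (\<lambda>z. x z k)"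
  shows "open {z. good (x z) K} \<and> (\<forall>j. continuous_on {z. good (x z) K} (\<lambda>z. gsq (x z) K j))"
proof (induction K)
  case 0 then show ?case by (simp add: good_def continuous_on_const)
next
  case (Suc K)
  define S where "S = {z. good (x z) K}"
  define R where "R = (\<lambda>z. rsd (gsq (x z) K) (x z K) K)"
  have oS: "open S" and cS: "\<And>j. continuous_on S (\<lambda>z. gsq (x z) K j)" using Suc by (auto simp: S_def)
  have cR: "continuous_on S R"
    unfolding R_def rsd_def
    by (intro continuous_intros cS continuous_on_subset[OF xc] subset_UNIV)
  have S': "{z. good (x z) (Suc K)} = S \<inter> R -` (- {0})"
    by (auto simp: S_def R_def good_Suc)
  have oS': "open {z. good (x z) (Suc K)}"
  proof -
    have "open (R -` (- {0}) \<inter> S)" using continuous_on_open_vimage[OF oS, of R] cR open_Compl[OF closed_singleton] by blast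
    then show ?thesis unfolding S' by (simp add: Int_commute)
  qed
  have sub: "{z. good (x z) (Suc K)} \<subseteq> S" unfolding S' by auto
  have "continuous_on {z. good (x z) (Suc K)} (\<lambda>z. gsq (x z) (Suc K) j)" for j
  proof (cases "j = K")
    case True
    have "continuous_on {z. good (x z) (Suc K)} (\<lambda>z. nrm (R z))"
      by (rule cont_nrm[OF continuous_on_subset[OF cR sub]]) (simp add: S')
    then show ?thesis using True by (simp add: R_def)
  next
    case False
    then show ?thesis using continuous_on_subset[OF cS sub] by simp
  qed
  then show ?case using oS' by blast
qed


lemma transl_nn:
  fixes M :: "'a::euclidean_space measure"
  assumes sM: "sets M = sets borel" and tM: "\<And>c. distr M borel ((+) c) = M"
    and f: "f \<in> borel_measurable borel"
  shows "(\<integral>\<^sup>+x. f x \<partial>M) = (\<integral>\<^sup>+x. f (c + x) \<partial>M)"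
proof -
  have m: "((+) c) \<in> measurable M borel" using sM by (simp add: measurable_cong_sets[OF sM refl])
  have "(\<integral>\<^sup>+x. f x \<partial>M) = (\<integral>\<^sup>+x. f x \<partial>distr M borel ((+) c))" by (simp add: tM)
  also have "\<dots> = (\<integral>\<^sup>+x. f (c + x) \<partial>M)"
    by (rule nn_integral_distr[OF m]) (use f in simp)
  finally show ?thesis .
qed

lemma transl_identity:
  fixes M N :: "'a::euclidean_space measure"
  assumes sM: "sets M = sets borel" and sN: "sets N = sets borel"
    and sfM: "sigma_finite_measure M" and sfN: "sigma_finite_measure N"
    and tM: "\<And>c. distr M borel ((+) c) = M" and tN: "\<And>c. distr N borel ((+) c) = N"
    and A: "A \<in> sets borel" and B: "B \<in> sets borel"
  shows "emeasure M A * emeasure N B = emeasure M B * emeasure N (uminus -` A)"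
proof -
  interpret pair_sigma_finite M N using sfM sfN by (simp add: pair_sigma_finite_def)
  have mp: "(\<lambda>(x,y). f x y) \<in> borel_measurable (M \<Otimes>\<^sub>M N)" 
    if "(\<lambda>(x,y). f x y) \<in> borel_measurable (borel \<Otimes>\<^sub>M borel)" for f :: "'a \<Rightarrow> 'a \<Rightarrow> ennreal"
    using that by (simp add: measurable_cong_sets[OF sets_pair_measure_cong[OF sM sN] refl])
  have AB: "A \<in> sets M" "B \<in> sets M" "A \<in> sets N" "B \<in> sets N" using A B sM sN by auto
  have "emeasure M A * emeasure N B = (\<integral>\<^sup>+x. indicator A x * emeasure N B \<partial>M)"
    using AB by (simp add: nn_integral_multc)
  also have "\<dots> = (\<integral>\<^sup>+x. (\<integral>\<^sup>+y. indicator A x * indicator B (x + y) \<partial>N) \<partial>M)"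
  proof (rule nn_integral_cong)
    fix x
    have "emeasure N B = (\<integral>\<^sup>+y. indicator B y \<partial>N)" using AB by simp
    also have "\<dots> = (\<integral>\<^sup>+y. indicator B (x + y) \<partial>N)"
      by (rule transl_nn[OF sN tN]) (use B in simp)
    moreover have "(\<lambda>y. indicator B (x + y) :: ennreal) \<in> borel_measurable N"
      unfolding measurable_cong_sets[OF sN refl] using B by measurable
    ultimately show "indicator A x * emeasure N B = (\<integral>\<^sup>+y. indicator A x * indicator B (x + y) \<partial>N)"
      by (subst nn_integral_cmult) auto
  qed
  also have "\<dots> = (\<integral>\<^sup>+y. (\<integral>\<^sup>+x. indicator A x * indicator B (x + y) \<partial>M) \<partial>N)"
    by (rule Fubini'[symmetric], rule mp) (use A B in measurable)
  also have "\<dots> = (\<integral>\<^sup>+y. (\<integral>\<^sup>+x. indicator A (- y + x) * indicator B x \<partial>M) \<partial>N)"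
  proof (rule nn_integral_cong)
    fix y
    show "(\<integral>\<^sup>+x. indicator A x * indicator B (x + y) \<partial>M) = (\<integral>\<^sup>+x. indicator A (- y + x) * indicator B x \<partial>M)"
      by (subst transl_nn[OF sM tM, of _ y]) (use A B in \<open>auto simp: add.commute\<close>)
  qed
  also have "\<dots> = (\<integral>\<^sup>+x. (\<integral>\<^sup>+y. indicator A (- y + x) * indicator B x \<partial>N) \<partial>M)"
    by (rule Fubini', rule mp) (use A B in measurable)
  also have "\<dots> = (\<integral>\<^sup>+x. indicator B x * emeasure N (uminus -` A) \<partial>M)"
  proof (rule nn_integral_cong)
    fix x
    have "(\<integral>\<^sup>+y. indicator A (- y + x) \<partial>N) = (\<integral>\<^sup>+y. indicator (uminus -` A) ((- x) + y) \<partial>N)"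
      by (auto intro!: nn_integral_cong simp: indicator_def algebra_simps)
    also have "\<dots> = (\<integral>\<^sup>+y. indicator (uminus -` A) y \<partial>N)"
      by (rule transl_nn[OF sN tN, symmetric]) (use A in measurable)
    also have "\<dots> = emeasure N (uminus -` A)"
    proof -
      have "uminus -` A \<in> sets borel"
        by (rule measurable_sets_borel[OF _ A]) (auto intro!: borel_measurable_continuous_onI continuous_intros)
      then show ?thesis using sN by simp
    qed
    moreover have "(\<lambda>y. indicator A (- y + x) :: ennreal) \<in> borel_measurable N"
      unfolding measurable_cong_sets[OF sN refl] using A by measurable
    ultimately show "(\<integral>\<^sup>+y. indicator A (- y + x) * indicator B x \<partial>N) = indicator B x * emeasure N (uminus -` A)"
      by (subst nn_integral_multc) (auto simp: mult.commute)
  qed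
  also have "\<dots> = emeasure M B * emeasure N (uminus -` A)"
    using AB by (simp add: nn_integral_multc)
  finally show ?thesis .
qed


lemma lborel_isometry:
  fixes L :: "'a::euclidean_space \<Rightarrow> 'a"
  assumes lin: "linear L" and su: "surj L" and nL: "\<And>x. norm (L x) = norm x"
  shows "distr lborel borel L = lborel"
proof -
  have cont: "continuous_on UNIV L"
    using lin by (simp add: linear_continuous_on linear_linear)
  have mL: "L \<in> borel \<rightarrow>\<^sub>M borel" by (rule borel_measurable_continuous_onI[OF cont])
  have mLl: "L \<in> lborel \<rightarrow>\<^sub>M borel" using mL by simp
  have pre_ball: "L -` ball 0 r = ball 0 r" for r by (auto simp: nL)
  define \<mu> where "\<mu> = distr lborel borel L"
  have s\<mu>: "sets \<mu> = sets borel" by (simp add: \<mu>_def)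
  have e\<mu>: "emeasure \<mu> A = emeasure lborel (L -` A)" if "A \<in> sets borel" for A
    using that mLl by (simp add: \<mu>_def emeasure_distr)
  have ball_eq: "emeasure \<mu> (ball 0 r) = emeasure lborel (ball (0::'a) r)" for r
    by (simp add: e\<mu> pre_ball)
  have sf\<mu>: "sigma_finite_measure \<mu>"
  proof (rule sigma_finite_measure.intro, intro exI conjI)
    show "countable (range (\<lambda>n::nat. ball (0::'a) (real n)))" by simp
    show "range (\<lambda>n::nat. ball (0::'a) (real n)) \<subseteq> sets \<mu>" unfolding s\<mu> by (simp add: image_subset_iff)
    show "\<Union> (range (\<lambda>n::nat. ball (0::'a) (real n))) = space \<mu>"
    proof -
      have sp: "space \<mu> = UNIV" using sets_eq_imp_space_eq[OF s\<mu>] by simp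
      have "x \<in> (\<Union>n. ball (0::'a) (real n))" for x
      proof -
        obtain n :: nat where "norm x < real n" using reals_Archimedean2 by blast
        then show ?thesis by auto
      qed
      then show ?thesis unfolding sp by blast
    qed
    show "\<forall>a\<in>range (\<lambda>n::nat. ball (0::'a) (real n)). emeasure \<mu> a \<noteq> \<infinity>"
    proof
      fix a assume "a \<in> range (\<lambda>n::nat. ball (0::'a) (real n))"
      then obtain n :: nat where a: "a = ball 0 (real n)" by blast
      show "emeasure \<mu> a \<noteq> \<infinity>" unfolding a ball_eq using emeasure_lborel_ball_finite[of "0::'a" "real n"]
        by simp
    qed
  qed
  have t\<mu>: "distr \<mu> borel ((+) c) = \<mu>" for c
  proof -
    obtain c' where c': "c = L c'" using su by (metis surjD)
    have "distr \<mu> borel ((+) c) = distr lborel borel ((+) c \<circ> L)"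
      unfolding \<mu>_def by (rule distr_distr) (auto intro: mL)
    also have "(+) c \<circ> L = L \<circ> (+) c'"
      by (auto simp: c' linear_add[OF lin])
    also have "distr lborel borel (L \<circ> (+) c') = distr (distr lborel borel ((+) c')) borel L"
      by (rule distr_distr[symmetric]) (auto intro: mL)
    also have "\<dots> = \<mu>" by (simp add: lborel_distr_plus \<mu>_def)
    finally show ?thesis .
  qed
  have tl: "distr lborel borel ((+) c) = lborel" for c :: 'a by (rule lborel_distr_plus)
  have sfl: "sigma_finite_measure (lborel :: 'a measure)" by (rule lborel.sigma_finite_measure_axioms)
  define B where "B = ball (0::'a) 1"
  have B: "B \<in> sets borel" by (simp add: B_def)
  obtain v where v: "emeasure lborel B = ennreal v" "v > 0"
    using emeasure_ball[of 1 "0::'a"] unit_ball_vol_pos[of "real DIM('a)"] by (auto simp: B_def)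
  show ?thesis
  proof (rule measure_eqI)
    show "sets (distr lborel borel L) = sets lborel" by simp
    fix A assume "A \<in> sets (distr lborel borel L)"
    then have A: "A \<in> sets borel" by simp
    have 1: "emeasure lborel A * emeasure lborel B = emeasure lborel B * emeasure lborel (uminus -` A)"
      by (rule transl_identity[OF _ _ sfl sfl tl tl A B]) auto
    have 2: "emeasure \<mu> A * emeasure lborel B = emeasure \<mu> B * emeasure lborel (uminus -` A)"
      by (rule transl_identity[OF s\<mu> _ sf\<mu> sfl t\<mu> tl A B]) auto
    have "emeasure lborel (uminus -` A) = emeasure lborel A"
    proof -
      have "emeasure lborel A * ennreal v = emeasure lborel (uminus -` A) * ennreal v"
        using 1 v(1) by (simp only: mult.commute)
      then show ?thesis using v(2) by (simp add: mult_right_ennreal_cancel)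
    qed
    with 2 have "emeasure \<mu> A * ennreal v = emeasure lborel A * ennreal v"
      using ball_eq[of 1] v(1) \<open>emeasure lborel (uminus -` A) = emeasure lborel A\<close>
      unfolding B_def by (simp only: mult.commute)
    then have "emeasure \<mu> A = emeasure lborel A" using v by (simp add: mult_right_ennreal_cancel)
    then show "emeasure (distr lborel borel L) A = emeasure lborel A" by (simp add: \<mu>_def)
  qed
qed


lemma unitary_sub_iff: "A \<in> unitary_sub B \<longleftrightarrow> A \<in> unitary_group \<and>
   (\<forall>i j. (i \<notin> B \<or> j \<notin> B) \<longrightarrow> A $ i $ j = (if i = j then 1 else 0))"
  by (simp add: unitary_sub_def)

lemma unitary_sub_mult:
  assumes "A \<in> unitary_sub B" "C \<in> unitary_sub B" shows "A ** C \<in> unitary_sub B"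
proof -
  have u: "A ** C \<in> unitary_group" using assms by (simp add: unitary_sub_iff unitary_mult)
  have "(A ** C) $ i $ j = (if i = j then 1 else 0)" if "i \<notin> B \<or> j \<notin> B" for i j
  proof (cases "j \<notin> B")
    case True
    then have hC: "C $ k $ j = (if k = j then 1 else 0)" for k using assms(2) by (simp add: unitary_sub_iff)
    have "(A ** C) $ i $ j = (\<Sum>k\<in>UNIV. A $ i $ k * (if k = j then 1 else 0))"
      unfolding matrix_matrix_mult_def by (simp only: vec_lambda_beta hC)
    also have "\<dots> = A $ i $ j" by (simp add: mult.commute[of "A $ i $ _"] if_distrib cong: if_cong)
    finally show ?thesis using assms(1) True by (simp add: unitary_sub_iff)
  next
    case False
    then have iB: "i \<notin> B" using that by simp
    then have hA: "A $ i $ k = (if i = k then 1 else 0)" for k using assms(1) by (simp add: unitary_sub_iff)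
    have "(A ** C) $ i $ j = (\<Sum>k\<in>UNIV. (if i = k then 1 else 0) * C $ k $ j)"
      unfolding matrix_matrix_mult_def by (simp only: vec_lambda_beta hA)
    also have "\<dots> = (\<Sum>k\<in>UNIV. if k = i then C $ k $ j else 0)" by (rule sum.cong) auto
    also have "\<dots> = C $ i $ j" by simp
    finally show ?thesis using assms(2) iB by (simp add: unitary_sub_iff)
  qed
  then show ?thesis using u by (simp add: unitary_sub_iff)
qed

lemma unitary_sub_ct: "A \<in> unitary_sub B \<Longrightarrow> conj_transpose A \<in> unitary_sub B"
  by (auto simp: unitary_sub_iff unitary_ct)

lemma unitary_sub_unitary: "unitary_sub B \<subseteq> unitary_group"
  by (auto simp: unitary_sub_iff)

lemma closed_unitary_sub: "closed (unitary_sub B)"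
proof -
  have "unitary_sub B = {A. A ** conj_transpose A = mat 1} \<inter> {A. conj_transpose A ** A = mat 1} \<inter>
     (\<Inter>p\<in>{p. fst p \<notin> B \<or> snd p \<notin> B}. {A. A $ fst p $ snd p = (if fst p = snd p then 1 else 0)})"
    by (auto simp: unitary_sub_iff unitary_iff)
  moreover have "closed {A::complex^'a^'a. A ** conj_transpose A = mat 1}"
    unfolding matrix_matrix_mult_def conj_transpose_def
    by (intro closed_Collect_eq continuous_intros)
  moreover have "closed {A::complex^'a^'a. conj_transpose A ** A = mat 1}"
    unfolding matrix_matrix_mult_def conj_transpose_def
    by (intro closed_Collect_eq continuous_intros)
  moreover have "closed {A::complex^'a^'a. A $ i $ j = c}" for i j c
    by (intro closed_Collect_eq continuous_intros)
  ultimately show ?thesis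
    by (auto intro!: closed_Int closed_INT)
qed

lemma matgroup_sub: "matgroup (unitary_sub B)"
  by (unfold_locales) (auto simp: unitary_sub_unitary unitary_sub_mult unitary_sub_ct
      closed_unitary_sub)


definition projB :: "'n set \<Rightarrow> complex^'n \<Rightarrow> complex^'n" where
  "projB B v = (\<chi> i. if i \<in> B then v $ i else 0)"

definition xcol :: "'n list \<Rightarrow> complex^'n^'n \<Rightarrow> nat \<Rightarrow> complex^'n" where
  "xcol bs Z k = (if k < length bs then projB (set bs) (column (bs ! k) Z) else 0)"

definition idx :: "'n list \<Rightarrow> 'n \<Rightarrow> nat" where
  "idx bs j = inv_into {..<length bs} ((!) bs) j"

definition Qm :: "'n list \<Rightarrow> complex^'n^'n \<Rightarrow> complex^'n^'n" where
  "Qm bs Z = (\<chi> i j. if j \<in> set bs then gsq (xcol bs Z) (length bs) (idx bs j) $ i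
                      else (if i = j then 1 else 0))"

definition Sg :: "'n list \<Rightarrow> (complex^'n^'n) set" where
  "Sg bs = {Z. good (xcol bs Z) (length bs)}"

lemma idx_props:
  assumes "distinct bs" "j \<in> set bs"
  shows "idx bs j < length bs" "bs ! idx bs j = j"
proof -
  have b: "bij_betw ((!) bs) {..<length bs} (set bs)" by (rule bij_betw_nth[OF assms(1)]) auto
  show "idx bs j < length bs" unfolding idx_def
    using b assms(2) by (metis bij_betw_def inv_into_into lessThan_iff)
  show "bs ! idx bs j = j" unfolding idx_def
    using b assms(2) by (metis bij_betw_inv_into_right)
qed

lemma idx_inj:
  assumes "distinct bs" "j \<in> set bs" "j' \<in> set bs" "idx bs j = idx bs j'"
  shows "j = j'"
  using idx_props[OF assms(1,2)] idx_props[OF assms(1,3)] assms(4) by metis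

lemma xcol_supp: "\<forall>i. i \<notin> set bs \<longrightarrow> xcol bs Z k $ i = 0"
  by (simp add: xcol_def projB_def)

lemma projB_mult:
  assumes "A \<in> unitary_sub B"
  shows "projB B (A *v c) = A *v projB B c"
proof -
  have h: "A $ i $ l = (if i = l then 1 else 0)" if "i \<notin> B \<or> l \<notin> B" for i l
    using assms that by (simp add: unitary_sub_iff)
  have "projB B (A *v c) $ i = (A *v projB B c) $ i" for i
  proof (cases "i \<in> B")
    case True
    have "(A *v c) $ i = (\<Sum>l\<in>UNIV. A $ i $ l * c $ l)" by (simp add: matrix_vector_mult_def)
    also have "\<dots> = (\<Sum>l\<in>UNIV. A $ i $ l * (if l \<in> B then c $ l else 0))"
      by (rule sum.cong) (auto simp: h True)
    also have "\<dots> = (A *v projB B c) $ i" by (simp add: matrix_vector_mult_def projB_def)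
    finally show ?thesis using True by (simp add: projB_def)
  next
    case False
    have "(A *v projB B c) $ i = (\<Sum>l\<in>UNIV. A $ i $ l * (if l \<in> B then c $ l else 0))"
      by (simp add: matrix_vector_mult_def projB_def)
    also have "\<dots> = 0" by (rule sum.neutral) (auto simp: h False)
    finally show ?thesis using False by (simp add: projB_def)
  qed
  then show ?thesis by (simp add: vec_eq_iff)
qed

lemma xcol_mult:
  assumes "A \<in> unitary_sub (set bs)"
  shows "xcol bs (A ** Z) = (\<lambda>k. A *v xcol bs Z k)"
  by (rule ext) (simp add: xcol_def column_mult projB_mult[OF assms])

lemma Sg_mult:
  assumes "A \<in> unitary_sub (set bs)"
  shows "A ** Z \<in> Sg bs \<longleftrightarrow> Z \<in> Sg bs"
  using good_unitary[of A "xcol bs Z"] assms unitary_sub_unitary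
  by (auto simp: Sg_def xcol_mult[OF assms])

lemma column_Qm:
  "column j (Qm bs Z) = (if j \<in> set bs then gsq (xcol bs Z) (length bs) (idx bs j)
      else (\<chi> i. if i = j then 1 else 0))"
  by (simp add: column_def Qm_def vec_eq_iff)

lemma Qm_mult:
  assumes "A \<in> unitary_sub (set bs)"
  shows "Qm bs (A ** Z) = A ** Qm bs Z"
proof -
  have Au: "A \<in> unitary_group" using assms unitary_sub_unitary by auto
  have "column j (Qm bs (A ** Z)) = column j (A ** Qm bs Z)" for j
  proof (cases "j \<in> set bs")
    case True
    then show ?thesis
      by (simp add: column_Qm column_mult xcol_mult[OF assms] gsq_unitary[OF Au])
  next
    case False
    have "A *v (\<chi> i. if i = j then 1 else 0) = (\<chi> i. if i = j then 1 else 0)"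
    proof -
      have "(A *v (\<chi> i. if i = j then 1 else 0)) $ i = A $ i $ j" for i
        by (simp add: matrix_vector_mult_def if_distrib[of "\<lambda>t. _ * t"] cong: if_cong)
      moreover have "A $ i $ j = (if i = j then 1 else 0)" for i
        using assms False by (simp add: unitary_sub_iff)
      ultimately show ?thesis by (simp add: vec_eq_iff)
    qed
    then show ?thesis using False by (simp add: column_Qm column_mult)
  qed
  then show ?thesis by (simp add: vec_eq_iff column_def)
qed


lemma hip_e_right: "hip v (\<chi> i. if i = j then 1 else 0) = v $ j"
proof -
  have "hip v (\<chi> i. if i = j then 1 else 0) = (\<Sum>i\<in>UNIV. if i = j then v $ i else 0)"
    unfolding hip_def by (rule sum.cong) auto
  then show ?thesis by simp
qed

lemma hip_e_left: "hip (\<chi> i. if i = j then 1 else 0) v = cnj (v $ j)"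
  by (subst hip_cnj) (simp add: hip_e_right)

lemma ct_mult_entry: "(conj_transpose Q ** Q) $ a $ b = hip (column b Q) (column a Q)"
  by (simp add: matrix_matrix_mult_def hip_def column_def mult.commute)

lemma Qm_unitary_sub:
  assumes d: "distinct bs" and Z: "Z \<in> Sg bs"
  shows "Qm bs Z \<in> unitary_sub (set bs)"
proof -
  define K where "K = length bs"
  define g where "g = gsq (xcol bs Z) K"
  have gd: "good (xcol bs Z) K" using Z by (simp add: Sg_def K_def)
  have orth: "i < K \<Longrightarrow> j < K \<Longrightarrow> hip (g i) (g j) = (if i = j then 1 else 0)" for i j
    unfolding g_def by (rule gsq_orth[OF gd])
  have supp: "i \<notin> set bs \<Longrightarrow> g m $ i = 0" for i m
    unfolding g_def by (rule gsq_supp[OF xcol_supp])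
  have col: "column j (Qm bs Z) = (if j \<in> set bs then g (idx bs j) else (\<chi> i. if i = j then 1 else 0))" for j
    by (simp add: column_Qm g_def K_def)
  have L: "conj_transpose (Qm bs Z) ** Qm bs Z = mat 1"
  proof -
    have "hip (column b (Qm bs Z)) (column a (Qm bs Z)) = (if a = b then 1 else 0)" for a b
    proof (cases "a \<in> set bs"; cases "b \<in> set bs")
      assume a: "a \<in> set bs" and b: "b \<in> set bs"
      then show ?thesis using idx_props[OF d a] idx_props[OF d b] idx_inj[OF d b a]
        by (auto simp: col orth K_def)
    next
      assume a: "a \<in> set bs" and b: "b \<notin> set bs"
      then show ?thesis using supp[OF b] by (auto simp: col hip_e_left)
    next
      assume a: "a \<notin> set bs" and b: "b \<in> set bs"
      then show ?thesis using supp[OF a] by (auto simp: col hip_e_right)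
    next
      assume a: "a \<notin> set bs" and b: "b \<notin> set bs"
      then show ?thesis by (auto simp: col hip_e_right)
    qed
    then show ?thesis by (simp add: vec_eq_iff ct_mult_entry mat_def)
  qed
  then have R: "Qm bs Z ** conj_transpose (Qm bs Z) = mat 1"
    using matrix_left_right_inverse by blast
  have blk: "Qm bs Z $ i $ j = (if i = j then 1 else 0)" if "i \<notin> set bs \<or> j \<notin> set bs" for i j
  proof (cases "j \<in> set bs")
    case True
    then have "i \<notin> set bs" "i \<noteq> j" using that by auto
    then show ?thesis using True supp by (simp add: Qm_def g_def K_def)
  next
    case False
    then show ?thesis by (simp add: Qm_def)
  qed
  show ?thesis using L R blk by (simp add: unitary_sub_iff unitary_iff)
qed

lemma mat1_Sg:
  assumes d: "distinct bs"
  shows "mat 1 \<in> Sg bs"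
proof -
  have x: "xcol bs (mat 1) k = (\<chi> i. if i = bs ! k then 1 else 0)" if "k < length bs" for k
    using that by (auto simp: xcol_def projB_def column_def mat_def vec_eq_iff)
  have "hip (xcol bs (mat 1) i) (xcol bs (mat 1) j) = (if i = j then 1 else 0)"
    if "i < length bs" "j < length bs" for i j
    using that x d by (auto simp: hip_e_right nth_eq_iff_index_eq)
  from gsq_orthonormal_input[OF this] show ?thesis by (simp add: Sg_def)
qed

lemma open_Sg: "open (Sg bs)" and cont_Qm: "continuous_on (Sg bs) (Qm bs)"
proof -
  have xc: "continuous_on UNIV (\<lambda>Z. xcol bs Z k)" for k
  proof (cases "k < length bs")
    case True
    have "continuous_on UNIV (\<lambda>Z::complex^'a^'a. if i \<in> set bs then Z $ i $ (bs ! k) else 0)" for i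
      by (cases "i \<in> set bs") (simp_all add: continuous_intros)
    then have "continuous_on UNIV (\<lambda>Z::complex^'a^'a. \<chi> i. if i \<in> set bs then Z $ i $ (bs ! k) else 0)"
      by (intro continuous_on_vec_lambda)
    moreover have "xcol bs Z k = (\<chi> i. if i \<in> set bs then Z $ i $ (bs ! k) else 0)" for Z
      using True by (simp add: xcol_def projB_def column_def vec_eq_iff)
    ultimately show ?thesis by simp
  next
    case False then show ?thesis by (simp add: xcol_def)
  qed
  from gsq_cont[of "xcol bs", OF xc] show "open (Sg bs)" unfolding Sg_def by blast
  have "continuous_on (Sg bs) (\<lambda>Z. gsq (xcol bs Z) (length bs) j)" for j
    using gsq_cont[of "xcol bs", OF xc] unfolding Sg_def by blast
  then have c: "continuous_on (Sg bs) (\<lambda>Z. if j \<in> set bs then gsq (xcol bs Z) (length bs) (idx bs j) $ i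
                      else (if i = j then 1 else 0))" for i j
    by (cases "j \<in> set bs") (simp_all add: continuous_intros)
  show "continuous_on (Sg bs) (Qm bs)"
    unfolding Qm_def by (intro continuous_on_vec_lambda c)
qed


lemma haar_exists:
  fixes bs :: "'n::finite list"
  assumes d: "distinct bs"
  shows "\<exists>M. haar_pred (unitary_sub (set bs)) M"
proof -
  define U where "U = unitary_sub (set bs)"
  define R where "R = norm (mat 1 :: complex^'n^'n) + 1"
  define K0 where "K0 = Sg bs \<inter> ball (0::complex^'n^'n) R"
  have oK0: "open K0" unfolding K0_def by (simp add: open_Sg open_Int)
  have bK0: "K0 \<in> sets borel" using oK0 by simp
  have m1: "mat 1 \<in> K0" unfolding K0_def R_def using mat1_Sg[OF d] by simp
  obtain e where e: "e > 0" "ball (mat 1) e \<subseteq> K0" using oK0 m1 open_contains_ball by blast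
  have pos: "emeasure lborel K0 \<noteq> 0"
  proof -
    have "emeasure lborel (ball (mat 1 :: complex^'n^'n) e) = ennreal (unit_ball_vol (real DIM(complex^'n^'n)) * e ^ DIM(complex^'n^'n))"
      using e by (simp add: emeasure_ball)
    moreover have "unit_ball_vol (real DIM(complex^'n^'n)) * e ^ DIM(complex^'n^'n) > 0"
      using e unit_ball_vol_pos by simp
    ultimately have "emeasure lborel (ball (mat 1 :: complex^'n^'n) e) > 0" by simp
    moreover have "emeasure lborel (ball (mat 1 :: complex^'n^'n) e) \<le> emeasure lborel K0"
      using e bK0 by (intro emeasure_mono) auto
    ultimately show ?thesis by auto
  qed
  have fin: "emeasure lborel K0 \<noteq> \<infinity>"
  proof -
    have "emeasure lborel K0 \<le> emeasure lborel (ball (0::complex^'n^'n) R)"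
      by (intro emeasure_mono) (auto simp: K0_def)
    then show ?thesis using emeasure_lborel_ball_finite[of "0::complex^'n^'n" R]
      by (auto simp: top_unique less_top)
  qed
  define \<nu> where "\<nu> = uniform_measure lborel K0"
  have s\<nu>: "sets \<nu> = sets borel" by (simp add: \<nu>_def)
  have sp\<nu>: "space \<nu> = UNIV" by (simp add: \<nu>_def)
  have p\<nu>: "prob_space \<nu>" unfolding \<nu>_def by (rule prob_space_uniform_measure[OF pos fin])
  have \<nu>K0: "emeasure \<nu> K0 = 1" unfolding \<nu>_def by (rule emeasure_uniform_measure_1[OF pos fin])
  have AE\<nu>: "AE Z in \<nu>. Z \<in> K0"
    unfolding \<nu>_def by (rule AE_uniform_measureI) (use bK0 in auto)
  define Qe where "Qe = (\<lambda>Z. if Z \<in> Sg bs then Qm bs Z else mat 1)"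
  have mQe: "Qe \<in> borel_measurable borel"
    unfolding Qe_def
    by (rule borel_measurable_continuous_on_if) (simp_all add: open_Sg cont_Qm continuous_on_const)
  have mQe\<nu>: "Qe \<in> \<nu> \<rightarrow>\<^sub>M borel" using mQe by (simp add: measurable_cong_sets[OF s\<nu> refl])
  define H where "H = distr \<nu> borel Qe"
  have bU: "U \<in> sets borel" unfolding U_def by (simp add: closed_unitary_sub)
  have sH: "sets H = sets borel" by (simp add: H_def)
  have pH: "prob_space H" unfolding H_def by (rule prob_space.prob_space_distr[OF p\<nu> mQe\<nu>])
  have eH: "emeasure H U = 1"
  proof -
    have eq: "emeasure H U = emeasure \<nu> (Qe -` U \<inter> space \<nu>)"
      unfolding H_def by (rule emeasure_distr[OF mQe\<nu> bU])
    have meas: "Qe -` U \<inter> space \<nu> \<in> sets \<nu>" using measurable_sets[OF mQe\<nu> bU] .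
    have sub: "K0 \<subseteq> Qe -` U \<inter> space \<nu>"
      using Qm_unitary_sub[OF d] by (auto simp: K0_def Qe_def U_def sp\<nu>)
    have "1 \<le> emeasure \<nu> (Qe -` U \<inter> space \<nu>)"
      using emeasure_mono[OF sub meas] \<nu>K0 by simp
    moreover have "emeasure \<nu> (Qe -` U \<inter> space \<nu>) \<le> 1"
      using prob_space.emeasure_le_1[OF p\<nu>] by blast
    ultimately show ?thesis using eq by simp
  qed
  have inv: "distr H borel (\<lambda>X. A ** X) = H" if A: "A \<in> U" for A
  proof -
    define L where "L = (\<lambda>X::complex^'n^'n. A ** X)"
    have Au: "A \<in> unitary_group" using A unitary_sub_unitary U_def by auto
    have mL: "L \<in> borel \<rightarrow>\<^sub>M borel" unfolding L_def by (rule meas_left_mult)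
    have mL\<nu>: "L \<in> \<nu> \<rightarrow>\<^sub>M borel" using mL by (simp add: measurable_cong_sets[OF s\<nu> refl])
    have K0L: "L Z \<in> K0 \<longleftrightarrow> Z \<in> K0" for Z
      using Sg_mult[of A bs Z] A norm_left_unitary[OF Au, of Z] by (auto simp: K0_def L_def U_def)
    have \<nu>L: "distr \<nu> borel L = \<nu>"
    proof (rule measure_eqI)
      show "sets (distr \<nu> borel L) = sets \<nu>" using s\<nu> by simp
      fix E assume "E \<in> sets (distr \<nu> borel L)"
      then have E: "E \<in> sets borel" by simp
      have KE: "K0 \<inter> E \<in> sets borel" using E bK0 by simp
      have lb: "distr lborel borel L = lborel"
        unfolding L_def
        by (rule lborel_isometry[OF linear_left_mult surj_left_unitary[OF Au] norm_left_unitary[OF Au]])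
      have mLl: "L \<in> lborel \<rightarrow>\<^sub>M borel" using mL by simp
      have pre: "K0 \<inter> L -` E = L -` (K0 \<inter> E)" using K0L by auto
      have "emeasure (distr \<nu> borel L) E = emeasure \<nu> (L -` E)"
        using emeasure_distr[OF mL\<nu> E] by (simp add: sp\<nu>)
      also have "\<dots> = emeasure lborel (K0 \<inter> L -` E) / emeasure lborel K0"
        unfolding \<nu>_def by (rule emeasure_uniform_measure) (use bK0 measurable_sets_borel[OF mL E] in auto)
      also have "emeasure lborel (K0 \<inter> L -` E) = emeasure lborel (K0 \<inter> E)"
      proof -
        have "emeasure lborel (L -` (K0 \<inter> E)) = emeasure (distr lborel borel L) (K0 \<inter> E)"
          using emeasure_distr[OF mLl KE] by simp
        then show ?thesis using lb pre by simp
      qed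
      also have "emeasure lborel (K0 \<inter> E) / emeasure lborel K0 = emeasure \<nu> E"
        unfolding \<nu>_def by (rule emeasure_uniform_measure[symmetric]) (use bK0 E in auto)
      finally show "emeasure (distr \<nu> borel L) E = emeasure \<nu> E" .
    qed
    have "distr H borel L = distr \<nu> borel (L \<circ> Qe)"
      unfolding H_def by (rule distr_distr[OF mL mQe\<nu>])
    also have "\<dots> = distr \<nu> borel (Qe \<circ> L)"
    proof (rule distr_cong_AE)
      show "AE x in \<nu>. (L \<circ> Qe) x = (Qe \<circ> L) x"
        using AE\<nu>
      proof eventually_elim
        case (elim Z)
        then have Z: "Z \<in> Sg bs" by (simp add: K0_def)
        then have "A ** Z \<in> Sg bs" using Sg_mult[of A bs Z] A by (simp add: U_def)
        then show ?case using Z Qm_mult[of A bs Z] A by (simp add: Qe_def L_def U_def)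
      qed
      show "L \<circ> Qe \<in> \<nu> \<rightarrow>\<^sub>M borel" using measurable_comp[OF mQe\<nu> mL] .
      show "Qe \<circ> L \<in> \<nu> \<rightarrow>\<^sub>M borel" using measurable_comp[OF mL\<nu> mQe] .
    qed simp_all
    also have "\<dots> = distr (distr \<nu> borel L) borel Qe"
      by (rule distr_distr[symmetric, OF mQe mL\<nu>])
    also have "\<dots> = H" by (simp add: \<nu>L H_def)
    finally show ?thesis by (simp add: L_def)
  qed
  show ?thesis
    using sH pH eH inv unfolding haar_pred_def U_def by blast
qed


lemma mv_scaleR_left: "(r *\<^sub>R M) *v v = r *\<^sub>R (M *v (v::complex^'m))"
  by (simp add: vec_eq_iff matrix_vector_mult_def scaleR_sum_right)

lemma mv_scaleR_right: "M *v (r *\<^sub>R v) = r *\<^sub>R (M *v (v::complex^'m))"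
  by (simp add: vec_eq_iff matrix_vector_mult_def scaleR_sum_right mult_scaleR_right)

lemma mv_sum_left: "(\<Sum>b\<in>S. f b) *v v = (\<Sum>b\<in>S. f b *v (v::complex^'m))"
  by (induction S rule: infinite_finite_induct) (simp_all add: matrix_vector_mult_add_rdistrib)

lemma bl_mv_left: "bounded_linear (\<lambda>M::complex^'m^'m. M *v v)"
proof -
  have "linear (\<lambda>M::complex^'m^'m. M *v v)"
    by (rule linearI) (simp_all add: matrix_vector_mult_add_rdistrib mv_scaleR_left)
  then show ?thesis by (simp add: linear_conv_bounded_linear)
qed

lemma bl_mv_right: "bounded_linear (\<lambda>v::complex^'m. M *v v)"
proof -
  have "linear (\<lambda>v::complex^'m. M *v v)"
    by (rule linearI) (simp_all add: matrix_vector_right_distrib mv_scaleR_right)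
  then show ?thesis by (simp add: linear_conv_bounded_linear)
qed

definition diagm :: "('n \<Rightarrow> complex) \<Rightarrow> complex^'n^'n" where
  "diagm d = (\<chi> i j. if i = j then d i else 0)"

lemma diagm_nth[simp]: "diagm d $ i $ j = (if i = j then d i else 0)"
  by (simp add: diagm_def)

lemma diagm_mult_left: "(diagm d ** X) $ i $ j = d i * X $ i $ j"
proof -
  have "(diagm d ** X) $ i $ j = (\<Sum>k\<in>UNIV. (if i = k then d i else 0) * X $ k $ j)"
    by (simp add: matrix_matrix_mult_def)
  also have "\<dots> = (\<Sum>k\<in>UNIV. if k = i then d i * X $ i $ j else 0)"
    by (rule sum.cong) auto
  finally show ?thesis by simp
qed

lemma diagm_mult_right: "(X ** diagm d) $ i $ j = X $ i $ j * d j"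
proof -
  have "(X ** diagm d) $ i $ j = (\<Sum>k\<in>UNIV. X $ i $ k * (if k = j then d k else 0))"
    by (simp add: matrix_matrix_mult_def)
  also have "\<dots> = (\<Sum>k\<in>UNIV. if k = j then X $ i $ j * d j else 0)"
    by (rule sum.cong) auto
  finally show ?thesis by simp
qed

lemma diagm_unitary:
  assumes "\<And>i. d i * cnj (d i) = 1"
  shows "diagm d \<in> unitary_group"
proof -
  have ct: "conj_transpose (diagm d) = diagm (\<lambda>i. cnj (d i))"
    by (simp add: vec_eq_iff)
  have 1: "diagm d ** conj_transpose (diagm d) = mat 1"
    unfolding ct by (simp add: vec_eq_iff diagm_mult_left mat_def assms)
  have 2: "conj_transpose (diagm d) ** diagm d = mat 1"
    unfolding ct using assms by (simp add: vec_eq_iff diagm_mult_left mat_def mult.commute)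
  show ?thesis using 1 2 by (simp add: unitary_iff)
qed

lemma torus_diag:
  assumes "t \<in> torus"
  shows "t = diagm (\<lambda>i. t $ i $ i)" "\<And>i. t $ i $ i * cnj (t $ i $ i) = 1"
proof -
  have off: "i \<noteq> j \<Longrightarrow> t $ i $ j = 0" for i j using assms by (simp add: torus_def)
  show td: "t = diagm (\<lambda>i. t $ i $ i)" using off by (auto simp: vec_eq_iff)
  have u: "t ** conj_transpose t = mat 1" using assms by (simp add: torus_def unitary_iff)
  fix i
  have "(t ** conj_transpose t) $ i $ i = 1" using u by (simp add: mat_def)
  moreover have "(t ** conj_transpose t) $ i $ i = t $ i $ i * cnj (t $ i $ i)"
    by (subst (1) td) (simp add: diagm_mult_left)
  ultimately show "t $ i $ i * cnj (t $ i $ i) = 1" by simp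
qed

lemma torus_split:
  assumes t: "t \<in> torus"
  obtains tB tO where "tB \<in> unitary_sub B" "tO \<in> torus"
    "\<And>X. X \<in> unitary_sub B \<Longrightarrow> t ** X = (tB ** X) ** tO"
proof -
  define dB where "dB = (\<lambda>i. if i \<in> B then t $ i $ i else 1)"
  define dO where "dO = (\<lambda>i. if i \<in> B then 1 else t $ i $ i)"
  have n: "\<And>i. t $ i $ i * cnj (t $ i $ i) = 1" by (rule torus_diag(2)[OF t])
  have uB: "diagm dB \<in> unitary_group" by (rule diagm_unitary) (simp add: dB_def n)
  have uO: "diagm dO \<in> unitary_group" by (rule diagm_unitary) (simp add: dO_def n)
  have tB: "diagm dB \<in> unitary_sub B"
    using uB by (auto simp: unitary_sub_iff dB_def)
  have tO: "diagm dO \<in> torus"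
    using uO by (auto simp: torus_def)
  have eq: "t ** X = (diagm dB ** X) ** diagm dO" if X: "X \<in> unitary_sub B" for X
  proof -
    have hX: "i \<notin> B \<or> j \<notin> B \<Longrightarrow> X $ i $ j = (if i = j then 1 else 0)" for i j
      using X by (simp add: unitary_sub_iff)
    have "(t ** X) $ i $ j = ((diagm dB ** X) ** diagm dO) $ i $ j" for i j
    proof -
      have lhs: "(t ** X) $ i $ j = t $ i $ i * X $ i $ j"
        by (subst torus_diag(1)[OF t]) (simp add: diagm_mult_left)
      have rhs: "((diagm dB ** X) ** diagm dO) $ i $ j = dB i * X $ i $ j * dO j"
        by (simp add: diagm_mult_left diagm_mult_right)
      show ?thesis
      proof (cases "i \<in> B \<and> j \<in> B")
        case True then show ?thesis unfolding lhs rhs by (simp add: dB_def dO_def)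
      next
        case False
        then have x: "X $ i $ j = (if i = j then 1 else 0)" using hX by blast
        show ?thesis unfolding lhs rhs using False by (cases "i = j") (auto simp: dB_def dO_def x)
      qed
    qed
    then show ?thesis by (simp add: vec_eq_iff)
  qed
  show ?thesis using that[OF tB tO eq] .
qed


lemma haar_sub_pred: "haar_pred (unitary_sub B) (haar_measure (unitary_sub (B :: 'n::finite set)))"
proof -
  obtain bs where bs: "set bs = B" "distinct bs" using finite_distinct_list[of B] by auto
  have "\<exists>M. haar_pred (unitary_sub B) M" using haar_exists[OF bs(2)] bs(1) by simp
  then show ?thesis by (rule matgroup.haar_measure_pred[OF matgroup_sub])
qed

lemma proj_torus_inv:
  fixes \<rho> :: "complex^'n^'n \<Rightarrow> complex^'m^'m"
  assumes rep: "is_rep \<rho>" and v: "v \<in> TorInv \<rho>" and t: "t \<in> torus"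
  shows "\<rho> t *v (integral\<^sup>L (haar_measure (unitary_sub B)) \<rho> *v v) =
         integral\<^sup>L (haar_measure (unitary_sub B)) \<rho> *v v"
proof (cases "integrable (haar_measure (unitary_sub B)) \<rho>")
  case False
  then show ?thesis by (simp add: not_integrable_integral_eq)
next
  case True
  define M where "M = haar_measure (unitary_sub B)"
  have hM: "haar_pred (unitary_sub B) M" unfolding M_def by (rule haar_sub_pred)
  have sM: "sets M = sets borel" using hM by (simp add: haar_pred_def)
  have AE: "AE X in M. X \<in> unitary_sub B" by (rule matgroup.haar_AE[OF matgroup_sub hM])
  have iM: "integrable M \<rho>" using True by (simp add: M_def)
  define f where "f = (\<lambda>X. \<rho> X *v v)"
  have if_: "integrable M f" unfolding f_def by (rule integrable_bounded_linear[OF bl_mv_left iM])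
  have Pv: "integral\<^sup>L M \<rho> *v v = integral\<^sup>L M f"
    unfolding f_def by (rule integral_bounded_linear[OF bl_mv_left iM, symmetric])
  have mf: "f \<in> borel_measurable borel"
    using borel_measurable_integrable[OF if_] by (simp add: measurable_cong_sets[OF sM refl])
  have vinv: "\<rho> A *v v = v" if "A \<in> torus" for A using v that by (simp add: TorInv_def)
  have repm: "\<rho> (A ** C) = \<rho> A ** \<rho> C" if "A \<in> unitary_group" "C \<in> unitary_group" for A C
    using rep that by (simp add: is_rep_def)
  have tu: "t \<in> unitary_group" using t by (simp add: torus_def)
  obtain tB tO where tB: "tB \<in> unitary_sub B" and tO: "tO \<in> torus"
    and eq: "\<And>X. X \<in> unitary_sub B \<Longrightarrow> t ** X = (tB ** X) ** tO"
    using torus_split[OF t] by metis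
  have tBu: "tB \<in> unitary_group" using tB unitary_sub_unitary by auto
  have tOu: "tO \<in> unitary_group" using tO by (simp add: torus_def)
  have key: "\<rho> t *v f X = f (tB ** X)" if X: "X \<in> unitary_sub B" for X
  proof -
    have Xu: "X \<in> unitary_group" using X unitary_sub_unitary by auto
    have "\<rho> t *v f X = \<rho> (t ** X) *v v"
      by (simp add: f_def matrix_vector_mul_assoc repm[OF tu Xu])
    also have "\<dots> = \<rho> ((tB ** X) ** tO) *v v" by (simp add: eq[OF X])
    also have "\<dots> = \<rho> (tB ** X) *v (\<rho> tO *v v)"
      by (simp add: repm[OF unitary_mult[OF tBu Xu] tOu] matrix_vector_mul_assoc)
    also have "\<dots> = f (tB ** X)" by (simp add: vinv[OF tO] f_def)
    finally show ?thesis .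
  qed
  have "\<rho> t *v integral\<^sup>L M f = (\<integral>X. \<rho> t *v f X \<partial>M)"
    by (rule integral_bounded_linear[OF bl_mv_right if_, symmetric])
  also have "\<dots> = (\<integral>X. f (tB ** X) \<partial>M)"
  proof -
    have m1: "(\<lambda>X. \<rho> t *v f X) \<in> borel_measurable M"
      by (rule borel_measurable_integrable[OF integrable_bounded_linear[OF bl_mv_right if_]])
    have "(\<lambda>X. f (tB ** X)) \<in> borel_measurable borel"
      by (rule measurable_compose[OF meas_left_mult mf])
    then have m2: "(\<lambda>X. f (tB ** X)) \<in> borel_measurable M"
      by (simp add: measurable_cong_sets[OF sM refl])
    show ?thesis by (rule integral_cong_AE[OF m1 m2]) (use AE key in auto)
  qed
  also have "\<dots> = integral\<^sup>L (distr M borel (\<lambda>X. tB ** X)) f"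
    by (rule integral_distr[symmetric]) (simp_all add: measurable_cong_sets[OF sM refl] mf)
  also have "distr M borel (\<lambda>X. tB ** X) = M" using hM tB by (simp add: haar_pred_def)
  finally show ?thesis using Pv by (simp add: M_def)
qed

theorem proposition3p1:
  fixes \<rho> :: "complex^'n^'n \<Rightarrow> complex^'m^'m" and w :: "'n set \<Rightarrow> real"
  assumes "is_rep \<rho>"
  shows "\<forall>v\<in>TorInv \<rho>. hyper_laplacian w \<rho> *v v \<in> TorInv \<rho>"
proof
  fix v assume v: "v \<in> TorInv \<rho>"
  define P where "P = (\<lambda>B. integral\<^sup>L (haar_measure (unitary_sub B)) \<rho>)"
  have Lv: "hyper_laplacian w \<rho> *v v = (\<Sum>B\<in>UNIV. w B *\<^sub>R (v - P B *v v))"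
    by (simp add: hyper_laplacian_def mv_sum_left mv_scaleR_left matrix_vector_mult_diff_rdistrib P_def)
  show "hyper_laplacian w \<rho> *v v \<in> TorInv \<rho>"
    unfolding TorInv_def
  proof (intro CollectI ballI)
    fix t :: "complex^'n^'n" assume t: "t \<in> torus"
    have vt: "\<rho> t *v v = v" using v t by (simp add: TorInv_def)
    have "\<rho> t *v (hyper_laplacian w \<rho> *v v) = (\<Sum>B\<in>UNIV. w B *\<^sub>R (\<rho> t *v v - \<rho> t *v (P B *v v)))"
      by (simp add: Lv mv_sum mv_scaleR_right matrix_vector_mult_diff_distrib)
    also have "\<dots> = (\<Sum>B\<in>UNIV. w B *\<^sub>R (v - P B *v v))"
      using proj_torus_inv[OF assms v t] by (simp add: vt P_def)
    finally show "\<rho> t *v (hyper_laplacian w \<rho> *v v) = hyper_laplacian w \<rho> *v v" by (simp add: Lv)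
  qed
qed


end
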